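(* Let $q$ be a prime power and $n\geq 3$. Let $\hat{C}$ be an $(n,q^{n-2},3)_q$ code and $\hat{D}$ an $(n-1,q^{n-3},3)_q$ code, both over $\mathbb{F}_q$. Let $C$ be a code equivalent to $\hat{C}$ such that $s(C,1,0)=\hat{D}$. Then there exist an element $g'\in G_n$ that permutes the values $\mathbb{F}_q\setminus\{0\}$ in the first coordinate (fixing $0$ there) and leaves all coordinates and all other symbol positions unchanged, a coordinate-value pair $(i,v)\in[n]\times\mathbb{F}_q$, and an element $g\in\mathrm{Iso}(s(h_{i,v}\hat{C},1,0),\hat{D})$ such that $C=g'\,e(g,1)\,h_{i,v}\,\hat{C}$.
   Context: $[m]=\{1,\dots,m\}$. An $(n,M,d)_q$ code is a subset of $\mathbb{F}_q^n$ with $M$ elements and minimum Hamming distance $d$. $G_n$ is the group of all pairs $g=(\pi;\sigma_1,\dots,\sigma_n)$ with $\pi$ a permutation of $[n]$ and each $\sigma_i$ a permutation of $\mathbb{F}_q$, acting on $\mathbb{F}_q^n$ by $(gc)_{\pi(i)}=\sigma_{\pi(i)}(c_i)$ for all $i\in[n]$; it acts on codes elementwise. Codes $C,C'$ are equivalent if $C=gC'$ for some $g\in G_n$, and $\mathrm{Iso}(C',C)=\{g\in G_n: gC'=C\}$. Shortening: $s(C,i,v)=\{(c_1,\dots,c_{i-1},c_{i+1},\dots,c_n): c\in C,\ c_i=v\}$. For $g\in G_{n-1}$, $e(g,1)\in G_n$ is the element that fixes coordinate $1$ with the identity permutation of its symbols and acts as $g$ on coordinates $2,\dots,n$ (i.e.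 $e(gC,1,v)=e(g,1)e(C,1,v)$ for all codes $C$ of length $n-1$ and all $v$, where $e(C,1,v)=\{(v,c_1,\dots,c_{n-1}):c\in C\}$). For $i\in[n]$ and $v\in\mathbb{F}_q$, $h_{i,v}\in G_n$ is the element that applies the cyclic permutation $(1\,2\,\cdots\,i)$ to the coordinates and then swaps the values $v$ and $0$ in the first coordinate. *)

theory Defs
  imports "HOL-Combinatorics.Permutations"
begin

text \<open>Words of length n over the alphabet 'a (the field F_q) are lists of length n;
  coordinate k of the paper (k in [n]) is list index k-1.\<close>

definition hamming :: "'a list \<Rightarrow> 'a list \<Rightarrow> nat" where
  "hamming x y = card {i. i < length x \<and> x ! i \<noteq> y ! i}"

definition min_dist :: "'a list set \<Rightarrow> nat" where
  "min_dist C = Min {hamming x y | x y. x \<in> C \<and> y \<in> C \<and> x \<noteq> y}"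

definition is_code :: "nat \<Rightarrow> nat \<Rightarrow> nat \<Rightarrow> 'a list set \<Rightarrow> bool" where
  "is_code n M d C \<longleftrightarrow> C \<subseteq> {c. length c = n} \<and> card C = M \<and> min_dist C = d"

text \<open>Group elements (pi; sigma_1..sigma_n), 0-indexed coordinates.\<close>
type_synonym 'a gelem = "(nat \<Rightarrow> nat) \<times> (nat \<Rightarrow> 'a \<Rightarrow> 'a)"

definition Gn :: "nat \<Rightarrow> 'a gelem set" where
  "Gn n = {(\<pi>, \<sigma>). \<pi> permutes {..<n} \<and> (\<forall>i<n. bij (\<sigma> i))}"

text \<open>(g c)_{pi(i)} = sigma_{pi(i)}(c_i), i.e. (g c)_j = sigma_j (c_{pi^{-1} j}).\<close>
definition act_word :: "'a gelem \<Rightarrow> 'a list \<Rightarrow> 'a list" where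
  "act_word g c = map (\<lambda>j. snd g j (c ! inv (fst g) j)) [0..<length c]"

definition act :: "'a gelem \<Rightarrow> 'a list set \<Rightarrow> 'a list set" where
  "act g C = act_word g ` C"

definition equivalent :: "nat \<Rightarrow> 'a list set \<Rightarrow> 'a list set \<Rightarrow> bool" where
  "equivalent n C C' \<longleftrightarrow> (\<exists>g \<in> Gn n. C = act g C')"

definition Iso :: "nat \<Rightarrow> 'a list set \<Rightarrow> 'a list set \<Rightarrow> 'a gelem set" where
  "Iso n C' C = {g \<in> Gn n. act g C' = C}"

text \<open>Shortening s(C,i,v), with i a 1-based coordinate.\<close>
definition shorten :: "'a list set \<Rightarrow> nat \<Rightarrow> 'a \<Rightarrow> 'a list set" where
  "shorten C i v = {take (i - 1) c @ drop i c | c. c \<in> C \<and> c ! (i - 1) = v}"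

text \<open>e(g,1): fix coordinate 1 (identity on symbols), act as g on coordinates 2..n.\<close>
definition ext1 :: "'a gelem \<Rightarrow> 'a gelem" where
  "ext1 g = ((\<lambda>k. case k of 0 \<Rightarrow> 0 | Suc k' \<Rightarrow> Suc (fst g k')),
             (\<lambda>k. case k of 0 \<Rightarrow> id | Suc k' \<Rightarrow> snd g k'))"

text \<open>h_{i,v}: cyclic coordinate permutation (1 2 ... i), then swap values v and 0
  in the first coordinate (i is 1-based).\<close>
definition hiv :: "nat \<Rightarrow> 'a::zero \<Rightarrow> 'a gelem" where
  "hiv i v = ((\<lambda>k. if k < i - 1 then Suc k else if k = i - 1 then 0 else k),
              (\<lambda>k. if k = 0 then (\<lambda>x. if x = v then 0 else if x = 0 then v else x) else id))"

end

theory Submission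
  imports Defs
begin

lemma act_word_nth: "j < length c \<Longrightarrow> act_word g c ! j = snd g j (c ! inv (fst g) j)"
  by (simp add: act_word_def)

lemma act_word_len[simp]: "length (act_word g c) = length c"
  by (simp add: act_word_def)

lemma inv_ext1:
  assumes "\<And>x. p' (p x) = x" "\<And>y. p (p' y) = y"
  shows "inv (\<lambda>k. case k of 0 \<Rightarrow> 0 | Suc k' \<Rightarrow> Suc (p k')) = (\<lambda>k. case k of 0 \<Rightarrow> 0 | Suc k' \<Rightarrow> Suc (p' k'))"
  by (rule inv_equality) (auto simp: assms split: nat.splits)

lemma act_ext1_cons:
  assumes "\<And>x. p' (fst g x) = x" "\<And>y. fst g (p' y) = y"
  shows "act_word (ext1 g) (a # w) = a # act_word g w"
proof -
  have inv: "inv (\<lambda>k. case k of 0 \<Rightarrow> 0 | Suc k' \<Rightarrow> Suc (fst g k')) = (\<lambda>k. case k of 0 \<Rightarrow> 0 | Suc k' \<Rightarrow> Suc (p' k'))"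
    by (rule inv_ext1) (auto simp: assms)
  have inv2: "inv (fst g) = p'" by (rule inv_equality) (auto simp: assms)
  show ?thesis
    by (rule nth_equalityI) (auto simp: act_word_nth ext1_def inv inv2 nth_Cons split: nat.splits)
qed

lemma act_g'_cons:
  "act_word (id, \<lambda>k. if k = 0 then t else id) (a # w) = t a # w"
  by (rule nth_equalityI) (auto simp: act_word_nth nth_Cons split: nat.splits)

theorem theorem5:
  fixes Chat C :: "'a::{finite,field} list set"
    and Dhat :: "'a list set"
    and n q :: nat
  assumes "q = card (UNIV :: 'a set)"
    and "n \<ge> 3"
    and "is_code n (q ^ (n - 2)) 3 Chat"
    and "is_code (n - 1) (q ^ (n - 3)) 3 Dhat"
    and "equivalent n C Chat"
    and "shorten C 1 0 = Dhat"
  shows "\<exists>g' i v g.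
           g' \<in> Gn n \<and> fst g' = id \<and> snd g' 0 0 = 0 \<and> (\<forall>j\<in>{1..<n}. snd g' j = id) \<and>
           i \<in> {1..n} \<and>
           g \<in> Iso (n - 1) (shorten (act (hiv i v) Chat) 1 0) Dhat \<and>
           C = act g' (act (ext1 g) (act (hiv i v) Chat))"
proof -
  have lenC: "\<And>c. c \<in> Chat \<Longrightarrow> length c = n" using assms(3) by (auto simp: is_code_def)
  obtain \<pi> \<sigma> where hp: "\<pi> permutes {..<n}" and hs: "\<forall>i<n. bij (\<sigma> i)"
    and hC: "C = act (\<pi>, \<sigma>) Chat"
    using assms(5) unfolding equivalent_def Gn_def by auto
  define j0 where "j0 = inv \<pi> 0"
  have j0n: "j0 < n" unfolding j0_def using permutes_in_image[OF permutes_inv[OF hp], of 0] assms(2) by auto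
  have pj0: "\<pi> j0 = 0" unfolding j0_def using permutes_inverses[OF hp] by simp
  have pinv1: "\<And>x. \<pi> (inv \<pi> x) = x" and pinv2: "\<And>x. inv \<pi> (\<pi> x) = x" using permutes_inverses[OF hp] by auto
  have plt: "\<And>x. \<pi> x < n \<longleftrightarrow> x < n" using permutes_in_image[OF hp] by auto
  have pilt: "\<And>x. inv \<pi> x < n \<longleftrightarrow> x < n" using permutes_in_image[OF permutes_inv[OF hp]] by auto
  define v where "v = inv (\<sigma> 0) 0"
  have bs0: "bij (\<sigma> 0)" using hs assms(2) by auto
  have sv: "\<sigma> 0 v = 0" unfolding v_def using bs0 by (simp add: bij_is_surj surj_f_inv_f)
  define sw where "sw = (\<lambda>x::'a. if x = v then 0 else if x = 0 then v else x)"
  have swsw: "\<And>x. sw (sw x) = x" unfolding sw_def by auto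
  define \<tau> where "\<tau> = \<sigma> 0 \<circ> sw"
  have bsw: "bij sw" using swsw by (metis bijI' )
  have btau: "bij \<tau>" unfolding \<tau>_def using bs0 bsw by (simp add: bij_comp)
  have tau0: "\<tau> 0 = 0" unfolding \<tau>_def sw_def using sv by auto
  define \<rho> where "\<rho> = (\<lambda>k::nat. if k < j0 then Suc k else if k = j0 then 0 else k)"
  define \<rho>i where "\<rho>i = (\<lambda>k::nat. if k = 0 then j0 else if k \<le> j0 then k - 1 else k)"
  have rr1: "\<And>k. \<rho> (\<rho>i k) = k" unfolding \<rho>_def \<rho>i_def by auto
  have rr2: "\<And>k. \<rho>i (\<rho> k) = k" unfolding \<rho>_def \<rho>i_def by auto
  have rlt: "\<And>k. \<rho> k < n \<longleftrightarrow> k < n" unfolding \<rho>_def using j0n by auto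
  have rilt: "\<And>k. \<rho>i k < n \<longleftrightarrow> k < n" unfolding \<rho>i_def using j0n by auto
  have r0: "\<And>k. \<rho> k = 0 \<longleftrightarrow> k = j0" unfolding \<rho>_def by auto
  define \<pi>' where "\<pi>' = (\<lambda>m. if m < n - 1 then \<pi> (\<rho>i (Suc m)) - 1 else m)"
  define \<pi>'i where "\<pi>'i = (\<lambda>m. if m < n - 1 then \<rho> (inv \<pi> (Suc m)) - 1 else m)"
  have A1: "\<And>m. m < n - 1 \<Longrightarrow> \<pi> (\<rho>i (Suc m)) \<noteq> 0"
    by (metis pinv2 pj0 r0 rr1 nat.distinct(1))
  have A2: "\<And>m. m < n - 1 \<Longrightarrow> \<rho> (inv \<pi> (Suc m)) \<noteq> 0"
    by (metis pinv1 pj0 r0 nat.distinct(1))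
  have B1: "\<And>m. m < n - 1 \<Longrightarrow> \<pi>' m < n - 1"
  proof -
    fix m assume m: "m < n - 1"
    have "\<pi> (\<rho>i (Suc m)) < n" using m plt rilt by auto
    then show "\<pi>' m < n - 1" using A1[OF m] m unfolding \<pi>'_def by auto
  qed
  have B2: "\<And>m. m < n - 1 \<Longrightarrow> \<pi>'i m < n - 1"
  proof -
    fix m assume m: "m < n - 1"
    have "\<rho> (inv \<pi> (Suc m)) < n" using m rlt pilt by auto
    then show "\<pi>'i m < n - 1" using A2[OF m] m unfolding \<pi>'i_def by auto
  qed
  have pp1: "\<And>m. \<pi>' (\<pi>'i m) = m"
  proof -
    fix m show "\<pi>' (\<pi>'i m) = m"
    proof (cases "m < n - 1")
      case True
      then have e: "Suc (\<pi>'i m) = \<rho> (inv \<pi> (Suc m))" using A2[OF True] unfolding \<pi>'i_def by auto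
      show ?thesis using B2[OF True] True unfolding \<pi>'_def e by (simp add: rr2 pinv1)
    qed (simp add: \<pi>'_def \<pi>'i_def)
  qed
  have pp2: "\<And>m. \<pi>'i (\<pi>' m) = m"
  proof -
    fix m show "\<pi>'i (\<pi>' m) = m"
    proof (cases "m < n - 1")
      case True
      then have e: "Suc (\<pi>' m) = \<pi> (\<rho>i (Suc m))" using A1[OF True] unfolding \<pi>'_def by auto
      show ?thesis using B1[OF True] True unfolding \<pi>'i_def e by (simp add: rr1 pinv2)
    qed (simp add: \<pi>'_def \<pi>'i_def)
  qed
  have pperm: "\<pi>' permutes {..<n-1}"
  proof (rule bij_imp_permutes)
    show "bij_betw \<pi>' {..<n - 1} {..<n - 1}"
      using B1 B2 pp1 pp2 by (intro bij_betw_byWitness[where f'=\<pi>'i]) auto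
  qed (simp add: \<pi>'_def)
  define g where "g = (\<pi>', \<lambda>m. \<sigma> (Suc m))"
  define g' where "g' = ((id::nat\<Rightarrow>nat), \<lambda>k::nat. if k = 0 then \<tau> else (id::'a\<Rightarrow>'a))"
  define h where "h = hiv (Suc j0) v"
  have fh: "fst h = \<rho>" unfolding h_def hiv_def \<rho>_def by (auto intro!: ext)
  have sh: "snd h = (\<lambda>k. if k = 0 then sw else id)" unfolding h_def hiv_def sw_def by simp
  have invr: "inv \<rho> = \<rho>i" by (rule inv_equality) (auto simp: rr1 rr2)
  have invp: "inv (fst (\<pi>, \<sigma>)) = inv \<pi>" by simp
  have ext_cons: "\<And>a w. act_word (ext1 g) (a # w) = a # act_word g w"
    by (rule act_ext1_cons[where p'=\<pi>'i]) (auto simp: g_def pp1 pp2)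
  have F: "\<And>a w. act_word g' (act_word (ext1 g) (a # w)) = \<tau> a # act_word g w"
    unfolding ext_cons g'_def by (rule act_g'_cons)
  have key: "\<And>c. length c = n \<Longrightarrow> act_word (\<pi>, \<sigma>) c = act_word g' (act_word (ext1 g) (act_word h c))"
  proof -
    fix c :: "'a list" assume lc: "length c = n"
    obtain a w where aw: "act_word h c = a # w" using lc assms(2)
      by (metis act_word_len list.exhaust list.size(3) not_numeral_le_zero)
    have lw: "length w = n - 1" using aw lc by (metis act_word_len diff_Suc_1 length_Cons)
    have a: "a = sw (c ! j0)" using arg_cong[OF aw, of "\<lambda>l. l ! 0"] lc assms(2)
      by (simp add: act_word_nth fh sh invr \<rho>i_def)
    have w: "\<And>k. k < n - 1 \<Longrightarrow> w ! k = c ! \<rho>i (Suc k)"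
    proof -
      fix k assume k: "k < n - 1"
      show "w ! k = c ! \<rho>i (Suc k)" using arg_cong[OF aw, of "\<lambda>l. l ! Suc k"] lc k
        by (simp add: act_word_nth fh sh invr)
    qed
    have invp': "inv \<pi>' = \<pi>'i" by (rule inv_equality) (auto simp: pp1 pp2)
    show "act_word (\<pi>, \<sigma>) c = act_word g' (act_word (ext1 g) (act_word h c))"
      unfolding aw F
    proof (rule nth_equalityI)
      show "length (act_word (\<pi>, \<sigma>) c) = length (\<tau> a # act_word g w)" using lc lw assms(2) by simp
    next
      fix j assume j: "j < length (act_word (\<pi>, \<sigma>) c)"
      show "act_word (\<pi>, \<sigma>) c ! j = (\<tau> a # act_word g w) ! j"
      proof (cases j)
        case 0
        then show ?thesis using j lc by (simp add: act_word_nth a \<tau>_def swsw j0_def)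
      next
        case (Suc m)
        have m: "m < n - 1" using j lc Suc by simp
        have i1: "\<pi>'i m < n - 1" using B2[OF m] .
        have e: "\<pi> (\<rho>i (Suc (\<pi>'i m))) = Suc m"
          using pp1[of m] A1[OF i1] i1 unfolding \<pi>'_def by auto
        have e2: "\<rho>i (Suc (\<pi>'i m)) = inv \<pi> (Suc m)" using e pinv2 by metis
        show ?thesis using Suc m lc lw i1
          by (simp add: act_word_nth g_def invp' w e2)
      qed
    qed
  qed
  have Ceq: "C = act g' (act (ext1 g) (act h Chat))"
    unfolding hC act_def image_image using key lenC by (auto intro!: image_cong)
  have lenX: "\<And>d. d \<in> act h Chat \<Longrightarrow> d \<noteq> []"
  proof -
    fix d assume "d \<in> act h Chat"
    then obtain c where "c \<in> Chat" "d = act_word h c" unfolding act_def by blast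
    then have "length d = n" using lenC by simp
    then show "d \<noteq> []" using assms(2) by auto
  qed
  have Sh: "shorten C 1 0 = act g (shorten (act h Chat) 1 0)"
  proof -
    have t0: "\<And>x. \<tau> x = 0 \<longleftrightarrow> x = 0" using tau0 btau by (metis bij_is_inj injD)
    have "shorten C 1 0 = {drop 1 c | c. c \<in> C \<and> c ! 0 = 0}" by (simp add: shorten_def)
    also have "\<dots> = act_word g ` {drop 1 c | c. c \<in> act h Chat \<and> c ! 0 = 0}"
    proof (rule set_eqI, rule iffI)
      fix x assume "x \<in> {drop 1 c | c. c \<in> C \<and> c ! 0 = 0}"
      then obtain c where c: "x = drop 1 c" "c \<in> C" "c ! 0 = 0" by blast
      then obtain d where d: "d \<in> act h Chat" "c = act_word g' (act_word (ext1 g) d)"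
        unfolding Ceq act_def by auto
      obtain a w where dw: "d = a # w" using lenX[OF d(1)] by (cases d) auto
      have cc: "c = \<tau> a # act_word g w" using d dw F by simp
      then have a0: "a = 0" using c(3) t0 by simp
      have "w \<in> {drop 1 c | c. c \<in> act h Chat \<and> c ! 0 = 0}"
        using d(1) dw a0 by force
      moreover have "x = act_word g w" using c(1) cc by simp
      ultimately show "x \<in> act_word g ` {drop 1 c | c. c \<in> act h Chat \<and> c ! 0 = 0}"
        by blast
    next
      fix x assume "x \<in> act_word g ` {drop 1 c | c. c \<in> act h Chat \<and> c ! 0 = 0}"
      then obtain d where d: "d \<in> act h Chat" "d ! 0 = 0" "x = act_word g (drop 1 d)" by blast
      obtain a w where dw: "d = a # w" using lenX[OF d(1)] by (cases d) auto
      have "act_word g' (act_word (ext1 g) d) \<in> C" unfolding Ceq act_def using d(1) by (simp add: act_def)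
      moreover have "act_word g' (act_word (ext1 g) d) = 0 # act_word g w"
        using d(2) dw F tau0 by simp
      moreover have "x = act_word g w" using d(3) dw by simp
      ultimately show "x \<in> {drop 1 c | c. c \<in> C \<and> c ! 0 = 0}"
        by (metis (mono_tags, lifting) mem_Collect_eq drop_Suc_Cons drop0 nth_Cons_0 One_nat_def)
    qed
    also have "\<dots> = act g (shorten (act h Chat) 1 0)" by (simp add: shorten_def act_def)
    finally show ?thesis .
  qed
  have gG: "g \<in> Gn (n - 1)" unfolding Gn_def g_def using pperm hs by auto
  have g'G: "g' \<in> Gn n" unfolding Gn_def g'_def using btau by (auto simp: permutes_id)
  show ?thesis
    apply (rule exI[of _ g'], rule exI[of _ "Suc j0"], rule exI[of _ v], rule exI[of _ g])
    using g'G gG Sh Ceq assms(6) j0n tau0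
    by (auto simp: g'_def Iso_def h_def)
qed

end
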